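(* Let the real variables be $c_{11},c_{22},c_{33},c_{12},c_{23},c_{31},s_{12},s_{23},s_{31}$ (collectively $(c,s)$). Define $p_3=c_{12}(c_{23}c_{31}-s_{23}s_{31})-s_{12}(s_{23}c_{31}+c_{23}s_{31})-c_{11}c_{22}c_{33}$, $p_{ij}=c_{ij}^2+s_{ij}^2-c_{ii}c_{jj}$ for $(i,j)\in\{(1,2),(2,3),(3,1)\}$, $q_3^1=s_{12}c_{33}+c_{23}s_{31}+s_{23}c_{31}$, $q_3^2=c_{12}c_{33}-c_{23}c_{31}+s_{23}s_{31}$. Then $\{(c,s):p_3=p_{12}=p_{23}=p_{31}=0\}=\{(c,s):q_3^1=q_3^2=p_{12}=p_{23}=p_{31}=0\}$. *)

theory Defs
  imports Main "HOL.Real"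
begin

definition p3 :: "real \<Rightarrow> real \<Rightarrow> real \<Rightarrow> real \<Rightarrow> real \<Rightarrow> real \<Rightarrow> real \<Rightarrow> real \<Rightarrow> real \<Rightarrow> real" where
  "p3 c11 c22 c33 c12 c23 c31 s12 s23 s31 =
     c12 * (c23 * c31 - s23 * s31) - s12 * (s23 * c31 + c23 * s31) - c11 * c22 * c33"

definition pij :: "real \<Rightarrow> real \<Rightarrow> real \<Rightarrow> real \<Rightarrow> real" where
  "pij cij sij cii cjj = cij^2 + sij^2 - cii * cjj"

definition q31 :: "real \<Rightarrow> real \<Rightarrow> real \<Rightarrow> real \<Rightarrow> real \<Rightarrow> real \<Rightarrow> real \<Rightarrow> real \<Rightarrow> real \<Rightarrow> real" where
  "q31 c11 c22 c33 c12 c23 c31 s12 s23 s31 = s12 * c33 + c23 * s31 + s23 * c31"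

definition q32 :: "real \<Rightarrow> real \<Rightarrow> real \<Rightarrow> real \<Rightarrow> real \<Rightarrow> real \<Rightarrow> real \<Rightarrow> real \<Rightarrow> real \<Rightarrow> real" where
  "q32 c11 c22 c33 c12 c23 c31 s12 s23 s31 = c12 * c33 - c23 * c31 + s23 * s31"

end

theory Submission
  imports Defs
begin

lemma sq0: "(x::real)^2 + y^2 = 0 \<Longrightarrow> x = 0 \<and> y = 0"
  by (metis add_nonneg_eq_0_iff zero_le_power2 power_eq_0_iff zero_neq_numeral)

lemma key:
  fixes c11 c22 c33 c12 c23 c31 s12 s23 s31 :: real
  assumes h12: "c12^2 + s12^2 = c11*c22" and h23: "c23^2 + s23^2 = c22*c33"
      and h31: "c31^2 + s31^2 = c33*c11"
  shows "(c12 * (c23 * c31 - s23 * s31) - s12 * (s23 * c31 + c23 * s31) = c11 * c22 * c33) \<longleftrightarrow>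
         (s12 * c33 + c23 * s31 + s23 * c31 = 0 \<and> c12 * c33 - c23 * c31 + s23 * s31 = 0)"
proof -
  define A where "A = c23 * c31 - s23 * s31"
  define B where "B = s23 * c31 + c23 * s31"
  have hAB: "A^2 + B^2 = c11*c22*c33^2"
  proof -
    have "A^2 + B^2 = (c23^2 + s23^2) * (c31^2 + s31^2)" unfolding A_def B_def by algebra
    also have "\<dots> = c11*c22*c33^2" using h23 h31 by (simp add: power2_eq_square)
    finally show ?thesis .
  qed
  have q: "(s12 * c33 + c23 * s31 + s23 * c31 = 0 \<and> c12 * c33 - c23 * c31 + s23 * s31 = 0)
          \<longleftrightarrow> (s12*c33 = -B \<and> c12*c33 = A)" unfolding A_def B_def by auto
  have lhs: "c12 * (c23 * c31 - s23 * s31) - s12 * (s23 * c31 + c23 * s31) = c12*A - s12*B"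
    unfolding A_def B_def by simp
  show ?thesis unfolding q lhs
  proof
    assume k: "c12*A - s12*B = c11*c22*c33"
    have e: "(c12*A - s12*B)^2 + (c12*B + s12*A)^2 = (c12^2+s12^2)*(A^2+B^2)" by algebra
    hence "(c11*c22*c33)^2 + (c12*B + s12*A)^2 = (c11*c22*c33)^2"
      using k h12 hAB by (simp add: power2_eq_square)
    hence im: "c12*B + s12*A = 0" by simp
    show "s12*c33 = -B \<and> c12*c33 = A"
    proof (cases "A^2 + B^2 = 0")
      case True
      hence AB: "A = 0" "B = 0" using sq0[OF True] by auto
      have "(c12*c33)^2 + (s12*c33)^2 = (c12^2+s12^2)*c33^2" by algebra
      also have "\<dots> = c11*c22*c33^2" using h12 by simp
      also have "\<dots> = 0" using hAB True by simp
      finally have z: "(c12*c33)^2 + (s12*c33)^2 = 0" .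
      show ?thesis using sq0[OF z] AB by simp
    next
      case False
      hence nz: "c11*c22*c33 \<noteq> 0" using hAB by (auto simp: power2_eq_square)
      have "c12*(A^2+B^2) = A*(c12*A - s12*B) + B*(c12*B + s12*A)" by algebra
      hence "c12*(c11*c22*c33^2) = A*(c11*c22*c33)" using hAB k im by simp
      hence "(c11*c22*c33) * (c12*c33) = (c11*c22*c33) * A" by (simp add: power2_eq_square algebra_simps)
      hence 1: "c12*c33 = A" by (rule mult_left_cancel[OF nz, THEN iffD1])
      have "s12*(A^2+B^2) = -B*(c12*A - s12*B) + A*(c12*B + s12*A)" by algebra
      hence "s12*(c11*c22*c33^2) = -B*(c11*c22*c33)" using hAB k im by simp
      hence "(c11*c22*c33) * (s12*c33) = (c11*c22*c33) * (-B)" by (simp add: power2_eq_square algebra_simps)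
      hence 2: "s12*c33 = -B" by (rule mult_left_cancel[OF nz, THEN iffD1])
      show ?thesis using 1 2 by simp
    qed
  next
    assume "s12*c33 = -B \<and> c12*c33 = A"
    hence a: "s12*c33 = -B" "c12*c33 = A" by auto
    show "c12*A - s12*B = c11*c22*c33"
    proof (cases "c33 = 0")
      case True
      have "c23^2 + s23^2 = 0" using h23 True by simp
      hence "c23 = 0 \<and> s23 = 0" by (rule sq0)
      thus ?thesis using True unfolding A_def B_def by simp
    next
      case False
      have "c33*(c12*A - s12*B) = (c12*c33)*A - (s12*c33)*B" by (simp add: algebra_simps)
      also have "\<dots> = A*A - (-B)*B" by (simp only: a)
      also have "\<dots> = A^2 + B^2" by (simp add: power2_eq_square)
      also have "\<dots> = c33 * (c11*c22*c33)" unfolding hAB by (simp add: power2_eq_square mult_ac)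
      finally show ?thesis using False by simp
    qed
  qed
qed

lemma key2:
  assumes "pij c12 s12 c11 c22 = 0" "pij c23 s23 c22 c33 = 0" "pij c31 s31 c33 c11 = 0"
  shows "p3 c11 c22 c33 c12 c23 c31 s12 s23 s31 = 0 \<longleftrightarrow>
      (q31 c11 c22 c33 c12 c23 c31 s12 s23 s31 = 0 \<and> q32 c11 c22 c33 c12 c23 c31 s12 s23 s31 = 0)"
proof -
  have h: "c12^2 + s12^2 = c11*c22" "c23^2 + s23^2 = c22*c33" "c31^2 + s31^2 = c33*c11"
    using assms unfolding pij_def by auto
  show ?thesis using key[OF h] unfolding p3_def q31_def q32_def by simp
qed

lemma key3:
  "(p3 c11 c22 c33 c12 c23 c31 s12 s23 s31 = 0 \<and> pij c12 s12 c11 c22 = 0 \<and>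
      pij c23 s23 c22 c33 = 0 \<and> pij c31 s31 c33 c11 = 0) =
   (q31 c11 c22 c33 c12 c23 c31 s12 s23 s31 = 0 \<and> q32 c11 c22 c33 c12 c23 c31 s12 s23 s31 = 0 \<and>
      pij c12 s12 c11 c22 = 0 \<and> pij c23 s23 c22 c33 = 0 \<and> pij c31 s31 c33 c11 = 0)"
  using key2[of c12 s12 c11 c22 c23 s23 c33 c31 s31] by blast

theorem proposition5:
  "{(c11, c22, c33, c12, c23, c31, s12, s23, s31).
      p3 (c11::real) c22 c33 c12 c23 c31 s12 s23 s31 = 0 \<and> pij c12 s12 c11 c22 = 0 \<and>
      pij c23 s23 c22 c33 = 0 \<and> pij c31 s31 c33 c11 = 0}
 = {(c11, c22, c33, c12, c23, c31, s12, s23, s31).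
      q31 c11 c22 c33 c12 c23 c31 s12 s23 s31 = 0 \<and> q32 c11 c22 c33 c12 c23 c31 s12 s23 s31 = 0 \<and>
      pij c12 s12 c11 c22 = 0 \<and> pij c23 s23 c22 c33 = 0 \<and> pij c31 s31 c33 c11 = 0}"
  by (simp only: key3)

end
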